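(* Let $m\ge0$ be an integer and write $s_n=s_n^{(1,m+2)}$. Then for all $n\ge0$, \[ s_n^2=\delta_{n,0}+s_{n-1}^2+s_{n-m-2}^2+2\sum_{l=m+2}^n P_{l-1}^{\{-2,-1,m\}}s_{n-l}^2 . \]
   Context: For positive integers $p<q$, $s_n^{(p,q)}$ is defined by $s_n^{(p,q)}=\delta_{0,n}+s_{n-p}^{(p,q)}+s_{n-q}^{(p,q)}$ for $n\ge0$ and $s_n^{(p,q)}=0$ for $n<0$. $\delta_{i,j}$ is $1$ if $i=j$ and $0$ otherwise. For a finite set $W$ of integers, $P_n^W$ is the number of permutations $\pi$ of $\{1,\dots,n\}$ with $\pi(i)-i\in W$ for all $i$ (the permanent of the $n\times n$ $(0,1)$ Toeplitz matrix whose $(i,j)$ entry is $1$ iff $j-i\in W$), with $P_0^W=1$. Empty sums are $0$. *)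

theory Defs
  imports Main "HOL-Combinatorics.Permutations"
begin

text \<open>Well-defined (terminating) for positive p, q; the guards 0 < p, 0 < q only matter outside that range.\<close>
function sseq :: "nat \<Rightarrow> nat \<Rightarrow> int \<Rightarrow> nat" where
  "sseq p q n = (if n < 0 then 0 else
      (if n = 0 then 1 else 0)
      + (if 0 < p then sseq p q (n - int p) else 0)
      + (if 0 < q then sseq p q (n - int q) else 0))"
  by auto
termination
  by (relation "measure (\<lambda>(p, q, n). nat (n + 1))") auto

definition Pperm :: "int set \<Rightarrow> nat \<Rightarrow> nat" where
  "Pperm W n = card {\<pi>. \<pi> permutes {1..n} \<and> (\<forall>i\<in>{1..n}. int (\<pi> i) - int i \<in> W)}"

end

theory Submission
  imports Defs
begin


fun imgs :: "int list \<Rightarrow> int list" where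
  "imgs [] = []"
| "imgs (w # ws) = (1 + w) # map (\<lambda>x. x + 1) (imgs ws)"

definition R :: "int set \<Rightarrow> int set \<Rightarrow> nat \<Rightarrow> nat" where
  "R W S n = card {ws. length ws = n \<and> set ws \<subseteq> W \<and> distinct (imgs ws) \<and> set (imgs ws) = S}"

lemma length_imgs[simp]: "length (imgs ws) = length ws"
  by (induction ws) auto

lemma imgs_nth: "i < length ws \<Longrightarrow> imgs ws ! i = int i + 1 + ws ! i"
  by (induction ws arbitrary: i) (auto simp: nth_Cons split: nat.splits)

lemma shift_eq: "(\<lambda>x::int. x - 1) ` A = {x. x + 1 \<in> A}"
  by (auto simp: image_iff) (metis add_diff_cancel_right')

lemma shift_eq2: "(\<lambda>x::int. x + 1) ` A = {x. x - 1 \<in> A}"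
  by (auto simp: image_iff) (metis diff_add_cancel)
lemma imgs_Cons_iff:
  "(distinct (imgs (w#ws)) \<and> set (imgs (w#ws)) = S) \<longleftrightarrow>
   (1 + w \<in> S \<and> distinct (imgs ws) \<and> set (imgs ws) = (\<lambda>x. x - 1) ` (S - {1 + w}))"
proof -
  have inj: "inj_on (\<lambda>x::int. x + 1) A" for A by (auto simp: inj_on_def)
  have d: "distinct (imgs (w#ws)) \<longleftrightarrow> w \<notin> set (imgs ws) \<and> distinct (imgs ws)"
    by (simp add: distinct_map inj shift_eq2)
  have s: "set (imgs (w#ws)) = insert (1 + w) {x. x - 1 \<in> set (imgs ws)}"
    by (simp add: shift_eq2)
  show ?thesis unfolding d s shift_eq
  proof (intro iffI conjI; (elim conjE)?)
    assume h: "w \<notin> set (imgs ws)" "distinct (imgs ws)" "insert (1 + w) {x. x - 1 \<in> set (imgs ws)} = S"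
    then show "1 + w \<in> S" "distinct (imgs ws)" by auto
    show "set (imgs ws) = {x. x + 1 \<in> S - {1 + w}}"
    proof (rule set_eqI, rule iffI)
      fix x assume x: "x \<in> set (imgs ws)"
      then have "x + 1 \<in> S" using h(3) by auto
      moreover have "x \<noteq> w" using x h(1) by auto
      ultimately show "x \<in> {x. x + 1 \<in> S - {1 + w}}" by simp
    next
      fix x assume "x \<in> {x. x + 1 \<in> S - {1 + w}}"
      then have "x + 1 \<in> S" "x \<noteq> w" by auto
      then have "x + 1 \<in> insert (1 + w) {x. x - 1 \<in> set (imgs ws)}" using h(3) by simp
      then show "x \<in> set (imgs ws)" using \<open>x \<noteq> w\<close> by simp
    qed
  next
    assume h: "1 + w \<in> S" "distinct (imgs ws)" "set (imgs ws) = {x. x + 1 \<in> S - {1 + w}}"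
    then show "w \<notin> set (imgs ws)" "distinct (imgs ws)" by (auto simp: add.commute)
    show "insert (1 + w) {x. x - 1 \<in> set (imgs ws)} = S"
    proof (rule set_eqI, rule iffI)
      fix x assume "x \<in> insert (1 + w) {x. x - 1 \<in> set (imgs ws)}"
      then show "x \<in> S" using h by auto
    next
      fix x assume "x \<in> S"
      then have "x - 1 \<in> set (imgs ws)" if "x \<noteq> 1 + w" using h(3) that by simp
      then show "x \<in> insert (1 + w) {x. x - 1 \<in> set (imgs ws)}" by blast
    qed
  qed
qed

lemma R_0: "R W S 0 = (if S = {} then 1 else 0)"
proof -
  have "{ws. length ws = 0 \<and> set ws \<subseteq> W \<and> distinct (imgs ws) \<and> set (imgs ws) = S}
      = (if S = {} then {[]} else {})" by auto
  then show ?thesis by (simp add: R_def)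
qed

lemma R_Suc:
  assumes "finite W"
  shows "R W S (Suc n) = (\<Sum>w\<in>W. if 1 + w \<in> S then R W ((\<lambda>x. x - 1) ` (S - {1 + w})) n else 0)"
proof -
  define T where "T S n = {ws. length ws = n \<and> set ws \<subseteq> W \<and> distinct (imgs ws) \<and> set (imgs ws) = S}" for S n
  have fin: "finite (T S n)" for S n
  proof -
    have "T S n \<subseteq> {ws. set ws \<subseteq> W \<and> length ws = n}" by (auto simp: T_def)
    then show ?thesis using finite_lists_length_eq[OF assms] finite_subset by blast
  qed
  have eq: "T S (Suc n) = (\<Union>w\<in>{w\<in>W. 1 + w \<in> S}. (Cons w) ` T ((\<lambda>x. x - 1) ` (S - {1 + w})) n)"
  proof (rule set_eqI)
    fix xs
    show "xs \<in> T S (Suc n) \<longleftrightarrow> xs \<in> (\<Union>w\<in>{w\<in>W. 1 + w \<in> S}. (Cons w) ` T ((\<lambda>x. x - 1) ` (S - {1 + w})) n)"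
    proof
      assume "xs \<in> T S (Suc n)"
      then obtain w ws where xs: "xs = w # ws" and h: "length ws = n" "w \<in> W" "set ws \<subseteq> W"
          "distinct (imgs (w#ws))" "set (imgs (w#ws)) = S"
        unfolding T_def by (auto simp: length_Suc_conv)
      then show "xs \<in> (\<Union>w\<in>{w\<in>W. 1 + w \<in> S}. (Cons w) ` T ((\<lambda>x. x - 1) ` (S - {1 + w})) n)"
        using imgs_Cons_iff[of w ws S] unfolding T_def by auto
    next
      assume "xs \<in> (\<Union>w\<in>{w\<in>W. 1 + w \<in> S}. (Cons w) ` T ((\<lambda>x. x - 1) ` (S - {1 + w})) n)"
      then obtain w ws where xs: "xs = w # ws" and h: "w \<in> W" "1 + w \<in> S"
          "ws \<in> T ((\<lambda>x. x - 1) ` (S - {1 + w})) n" by auto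
      then show "xs \<in> T S (Suc n)"
        using imgs_Cons_iff[of w ws S] unfolding T_def by auto
    qed
  qed
  have "card (T S (Suc n)) = (\<Sum>w\<in>{w\<in>W. 1 + w \<in> S}. card ((Cons w) ` T ((\<lambda>x. x - 1) ` (S - {1 + w})) n))"
    unfolding eq by (rule card_UN_disjoint) (auto simp: fin assms)
  also have "\<dots> = (\<Sum>w\<in>{w\<in>W. 1 + w \<in> S}. card (T ((\<lambda>x. x - 1) ` (S - {1 + w})) n))"
    by (rule sum.cong) (auto simp: card_image)
  also have "\<dots> = (\<Sum>w\<in>W. if 1 + w \<in> S then R W ((\<lambda>x. x - 1) ` (S - {1 + w})) n else 0)"
    unfolding R_def T_def by (simp add: sum.inter_filter assms)
  finally show ?thesis by (simp add: R_def T_def)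
qed

lemma imgs_ge: "set ws \<subseteq> {w. w \<ge> -2} \<Longrightarrow> y \<in> set (imgs ws) \<Longrightarrow> y \<ge> -1"
  by (induction ws arbitrary: y) force+

lemma R_low:
  assumes "W \<subseteq> {w. w \<ge> -2}" "x \<in> S" "x < -1"
  shows "R W S n = 0"
proof -
  have "{ws. length ws = n \<and> set ws \<subseteq> W \<and> distinct (imgs ws) \<and> set (imgs ws) = S} = {}"
    using imgs_ge assms by fastforce
  then show ?thesis unfolding R_def by (metis card.empty)
qed



definition a :: "nat \<Rightarrow> nat \<Rightarrow> nat \<Rightarrow> nat" where
  "a m e j = R {-2, -1, int m} ({0..int j} - {int e}) j"

lemma a_small: "j < e \<Longrightarrow> a m e j = 0"
proof -
  assume "j < e"
  then have S: "{0..int j} - {int e} = {0..int j}" by auto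
  have "{ws. length ws = j \<and> set ws \<subseteq> {-2, -1, int m} \<and> distinct (imgs ws) \<and> set (imgs ws) = {0..int j}} = {}"
  proof -
    { fix ws assume "length ws = j" "distinct (imgs ws)" "set (imgs ws) = {0..int j}"
      then have "card {0..int j} = j" using distinct_card by fastforce
      then have False by simp }
    then show ?thesis by blast
  qed
  then show ?thesis unfolding a_def S R_def by (metis card.empty)
qed

lemma a_0: "a m e 0 = (if e = 0 then 1 else 0)"
  unfolding a_def R_0 by auto

lemma a_zero_Suc: "a m 0 (Suc n) = a m m n"
proof -
  have "a m 0 (Suc n) = (\<Sum>w\<in>{-2, -1, int m}. if 1 + w \<in> {0..int (Suc n)} - {0}
      then R {-2, -1, int m} ((\<lambda>x. x - 1) ` ({0..int (Suc n)} - {0} - {1 + w})) n else 0)"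
    unfolding a_def by (subst R_Suc) auto
  also have "\<dots> = (if m \<le> n then R {-2, -1, int m} ((\<lambda>x. x - 1) ` ({0..int (Suc n)} - {0} - {1 + int m})) n else 0)"
    by simp
  also have "\<dots> = (if m \<le> n then a m m n else 0)"
  proof -
    have "(\<lambda>x. x - 1) ` ({0..int (Suc n)} - {0} - {1 + int m}) = {0..int n} - {int m}"
      unfolding shift_eq by auto
    then show ?thesis by (simp add: a_def)
  qed
  also have "\<dots> = a m m n" using a_small[of n m m] by auto
  finally show ?thesis .
qed



lemma c_eq:
  "x < y \<Longrightarrow> R {-2, -1, int m} ({-1..int n} - {int x, int y}) n = (if x < n then a m (y - x - 1) (n - x - 1) else 0)"
proof (induction n arbitrary: x y)
  case 0
  have "-1 \<in> {-1..int 0} - {int x, int y}" by auto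
  then have "{-1..int 0} - {int x, int y} \<noteq> {}" by blast
  then show ?case by (simp only: R_0) simp
next
  case (Suc n)
  let ?W = "{-2, -1, int m} :: int set"
  let ?S = "{-1..int (Suc n)} - {int x, int y}"
  have W: "?W \<subseteq> {w. w \<ge> -2}" by auto
  have z1: "(if 1 + w \<in> ?S then R ?W ((\<lambda>x. x - 1) ` (?S - {1 + w})) n else 0) = 0" if "w \<noteq> -2" "w \<in> ?W" for w
  proof (cases "1 + w \<in> ?S")
    case True
    have "-2 \<in> (\<lambda>x. x - 1) ` (?S - {1 + w})" unfolding shift_eq using that by auto
    then show ?thesis using R_low[OF W, of "-2"] True by auto
  next
    case False
    then show ?thesis by (rule if_not_P)
  qed
  have "R ?W ?S (Suc n) = (\<Sum>w\<in>?W. if 1 + w \<in> ?S then R ?W ((\<lambda>x. x - 1) ` (?S - {1 + w})) n else 0)"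
    by (subst R_Suc) auto
  also have "\<dots> = R ?W ((\<lambda>x. x - 1) ` (?S - {-1})) n"
  proof -
    have "(\<Sum>w\<in>?W. if 1 + w \<in> ?S then R ?W ((\<lambda>x. x - 1) ` (?S - {1 + w})) n else 0)
        = (\<Sum>w\<in>{-2}. if 1 + w \<in> ?S then R ?W ((\<lambda>x. x - 1) ` (?S - {1 + w})) n else 0)"
    proof (rule sum.mono_neutral_right)
      show "\<forall>w\<in>?W - {-2}. (if 1 + w \<in> ?S then R ?W ((\<lambda>x. x - 1) ` (?S - {1 + w})) n else 0) = 0"
        by (intro ballI z1) auto
    qed auto
    then show ?thesis by simp
  qed
  also have "\<dots> = (if x < Suc n then a m (y - x - 1) (Suc n - x - 1) else 0)"
  proof (cases x)
    case 0
    have "(\<lambda>x. x - 1) ` (?S - {-1}) = {0..int n} - {int (y - 1)}"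
      unfolding shift_eq using 0 Suc.prems by auto
    then show ?thesis using 0 by (simp add: a_def)
  next
    case (Suc x')
    have "(\<lambda>x. x - 1) ` (?S - {-1}) = {-1..int n} - {int x', int (y - 1)}"
      unfolding shift_eq using Suc Suc.prems by auto
    then show ?thesis using Suc Suc.IH[of x' "y - 1"] Suc.prems by simp
  qed
  finally show ?case .
qed



lemma a_Suc:
  assumes "1 \<le> e" "e \<le> m"
  shows "a m e (Suc n) = a m (e - 1) n + (if e \<le> n then a m (m - e) (n - e) else 0)"
proof -
  let ?W = "{-2, -1, int m} :: int set"
  let ?S = "{0..int (Suc n)} - {int e}"
  have "a m e (Suc n) = (\<Sum>w\<in>?W. if 1 + w \<in> ?S then R ?W ((\<lambda>x. x - 1) ` (?S - {1 + w})) n else 0)"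
    unfolding a_def by (subst R_Suc) auto
  also have "\<dots> = R ?W ((\<lambda>x. x - 1) ` (?S - {0})) n
     + (if m \<le> n then R ?W ((\<lambda>x. x - 1) ` (?S - {1 + int m})) n else 0)"
    using assms by simp
  also have "R ?W ((\<lambda>x. x - 1) ` (?S - {0})) n = a m (e - 1) n"
  proof -
    have "(\<lambda>x. x - 1) ` (?S - {0}) = {0..int n} - {int (e - 1)}"
      unfolding shift_eq using assms by auto
    then show ?thesis by (simp add: a_def)
  qed
  also have "(if m \<le> n then R ?W ((\<lambda>x. x - 1) ` (?S - {1 + int m})) n else 0)
      = (if e \<le> n then a m (m - e) (n - e) else 0)"
  proof -
    have "(\<lambda>x. x - 1) ` (?S - {1 + int m}) = {-1..int n} - {int (e - 1), int m}"
      unfolding shift_eq using assms by auto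
    then have "R ?W ((\<lambda>x. x - 1) ` (?S - {1 + int m})) n = (if e - 1 < n then a m (m - (e - 1) - 1) (n - (e - 1) - 1) else 0)"
      using c_eq[of "e - 1" m m n] assms by simp
    moreover have "m - (e - 1) - 1 = m - e" "n - (e - 1) - 1 = n - e" using assms by auto
    moreover have "e \<le> n \<Longrightarrow> \<not> m \<le> n \<Longrightarrow> a m (m - e) (n - e) = 0"
      by (rule a_small) (use assms in auto)
    ultimately show ?thesis using assms by auto
  qed
  finally show ?thesis .
qed



lemma Pperm_R: "Pperm W N = R W {1..int N} N"
proof -
  let ?P = "{\<pi>. \<pi> permutes {1..N} \<and> (\<forall>i\<in>{1..N}. int (\<pi> i) - int i \<in> W)}"
  let ?T = "{ws. length ws = N \<and> set ws \<subseteq> W \<and> distinct (imgs ws) \<and> set (imgs ws) = {1..int N}}"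
  define f where "f \<pi> = map (\<lambda>i. int (\<pi> (Suc i)) - int (Suc i)) [0..<N]" for \<pi> :: "nat \<Rightarrow> nat"
  have imgs_f: "imgs (f \<pi>) = map (\<lambda>i. int (\<pi> (Suc i))) [0..<N]" for \<pi>
    by (rule nth_equalityI) (auto simp: f_def imgs_nth)
  have inj: "inj_on f ?P"
  proof (rule inj_onI)
    fix p1 p2 assume p1: "p1 \<in> ?P" and p2: "p2 \<in> ?P" and eq: "f p1 = f p2"
    show "p1 = p2"
    proof
      fix x
      show "p1 x = p2 x"
      proof (cases "x \<in> {1..N}")
        case True
        then obtain i where i: "i < N" "x = Suc i" by (cases x) auto
        then have "f p1 ! i = f p2 ! i" using eq by simp
        then show ?thesis using i by (simp add: f_def)
      next
        case False
        have "p1 permutes {1..N}" "p2 permutes {1..N}" using p1 p2 by auto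
        then show ?thesis using False by (metis permutes_not_in)
      qed
    qed
  qed
  have img: "f ` ?P = ?T"
  proof
    show "f ` ?P \<subseteq> ?T"
    proof
      fix ws assume "ws \<in> f ` ?P"
      then obtain \<pi> where \<pi>: "\<pi> permutes {1..N}" "\<forall>i\<in>{1..N}. int (\<pi> i) - int i \<in> W" and ws: "ws = f \<pi>"
        by blast
      have "length ws = N" using ws by (simp add: f_def)
      moreover have "set ws \<subseteq> W" using ws \<pi>(2) unfolding f_def by (auto simp del: of_nat_Suc)
      moreover have "distinct (imgs ws)"
        unfolding ws imgs_f distinct_map using permutes_inj[OF \<pi>(1)] by (auto simp: inj_on_def)
      moreover have "set (imgs ws) = {1..int N}"
      proof -
        have "set (imgs ws) = (\<lambda>i. int (\<pi> (Suc i))) ` {0..<N}" by (simp add: ws imgs_f)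
        also have "\<dots> = int ` \<pi> ` (Suc ` {0..<N})" by (simp only: image_image)
        also have "Suc ` {0..<N} = {1..N}" by auto
        also have "\<pi> ` {1..N} = {1..N}" by (rule permutes_image[OF \<pi>(1)])
        finally show ?thesis by (simp add: image_int_atLeastAtMost)
      qed
      ultimately show "ws \<in> ?T" by blast
    qed
  next
    show "?T \<subseteq> f ` ?P"
    proof
      fix ws assume ws: "ws \<in> ?T"
      define \<pi> where "\<pi> i = (if i \<in> {1..N} then nat (imgs ws ! (i - 1)) else i)" for i
      have len: "length (imgs ws) = N" using ws by simp
      have mem: "imgs ws ! i \<in> {1..int N}" if "i < N" for i
        using ws nth_mem[of i "imgs ws"] len that by auto
      have vals: "int (\<pi> i) = imgs ws ! (i - 1)" if "i \<in> {1..N}" for i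
      proof -
        have "i - 1 < N" using that by auto
        then have "imgs ws ! (i - 1) \<ge> 1" using mem[of "i - 1"] by auto
        then show ?thesis using that by (simp add: \<pi>_def)
      qed
      have injp: "inj_on \<pi> {1..N}"
      proof (rule inj_onI)
        fix i j assume i: "i \<in> {1..N}" and j: "j \<in> {1..N}" and e: "\<pi> i = \<pi> j"
        then have "imgs ws ! (i - 1) = imgs ws ! (j - 1)" using vals[OF i] vals[OF j] by simp
        moreover have "distinct (imgs ws)" using ws by simp
        moreover have "i - 1 < length (imgs ws)" "j - 1 < length (imgs ws)" using i j len by auto
        ultimately have "i - 1 = j - 1" using nth_eq_iff_index_eq by blast
        moreover have "1 \<le> i" "1 \<le> j" using i j by auto
        ultimately show "i = j" by linarith
      qed
      have sub: "\<pi> ` {1..N} \<subseteq> {1..N}"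
      proof
        fix y assume "y \<in> \<pi> ` {1..N}"
        then obtain i where i: "i \<in> {1..N}" "y = \<pi> i" by blast
        then have "int y \<in> {1..int N}" using vals[OF i(1)] mem[of "i - 1"] by auto
        then show "y \<in> {1..N}" by auto
      qed
      have "bij_betw \<pi> {1..N} {1..N}"
        unfolding bij_betw_def using injp endo_inj_surj[OF _ sub injp] by simp
      then have perm: "\<pi> permutes {1..N}"
        by (rule bij_imp_permutes) (auto simp: \<pi>_def)
      have fp: "f \<pi> = ws"
      proof (rule nth_equalityI)
        show "length (f \<pi>) = length ws" using ws by (simp add: f_def)
        fix i assume "i < length (f \<pi>)"
        then have i: "i < N" by (simp add: f_def)
        have "int (\<pi> (Suc i)) = imgs ws ! i" using vals[of "Suc i"] i by simp
        then show "f \<pi> ! i = ws ! i" using i ws by (simp add: f_def imgs_nth)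
      qed
      have cond: "\<forall>i\<in>{1..N}. int (\<pi> i) - int i \<in> W"
      proof
        fix i assume i: "i \<in> {1..N}"
        have i1: "i - 1 < length ws" "int (i - 1) + 1 = int i" using i ws by auto
        have "int (\<pi> i) - int i = ws ! (i - 1)" using vals[OF i] imgs_nth[OF i1(1)] i1(2) by simp
        moreover have "ws ! (i - 1) \<in> W" using i ws nth_mem[of "i - 1" ws] by auto
        ultimately show "int (\<pi> i) - int i \<in> W" by simp
      qed
      show "ws \<in> f ` ?P" using perm cond fp by blast
    qed
  qed
  have "Pperm W N = card ?P" by (simp add: Pperm_def)
  also have "\<dots> = card ?T" using card_image[OF inj] img by simp
  finally show ?thesis by (simp add: R_def)
qed



lemma s_neg: "k < 0 \<Longrightarrow> sseq p q k = 0"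
  by (subst sseq.simps) simp

lemma s_rec: "0 \<le> k \<Longrightarrow> sseq 1 (m + 2) k
   = (if k = 0 then 1 else 0) + sseq 1 (m + 2) (k - 1) + sseq 1 (m + 2) (k - int m - 2)"
  by (subst sseq.simps) (simp del: sseq.simps add: algebra_simps)

lemma sum_reindex_ge: fixes K e :: nat shows "(\<Sum>j<K. if e \<le> j then h j else 0) = (\<Sum>i<K - e. h (i + e))"
proof (induction K)
  case 0
  then show ?case by simp
next
  case (Suc K)
  show ?case
  proof (cases "e \<le> K")
    case True
    then have "Suc K - e = Suc (K - e)" by simp
    then show ?thesis using Suc True by simp
  next
    case False
    then show ?thesis using Suc by simp
  qed
qed

lemma key:
  fixes m e K :: nat and k :: int
  assumes "e \<le> m" "k \<le> int K"
  shows "sseq 1 (m + 2) k * sseq 1 (m + 2) (k - int e - 1)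
       = (\<Sum>j<K. a m e j * (sseq 1 (m + 2) (k - 1 - int j))^2)"
  using assms
proof (induction "nat (k + 1)" arbitrary: k e K rule: less_induct)
  case less
  let ?s = "sseq 1 (m + 2)"
  show ?case
  proof (cases "k \<le> 0")
    case True
    have "?s (k - int e - 1) = 0" using True by (simp add: s_neg del: sseq.simps)
    moreover have "?s (k - 1 - int j) = 0" for j using True by (simp add: s_neg del: sseq.simps)
    ultimately show ?thesis by (simp del: sseq.simps)
  next
    case False
    then obtain K' where K: "K = Suc K'" using less.prems by (cases K) auto
    have kK: "k - 1 \<le> int K'" using less.prems K by simp
    have rec: "?s k = ?s (k - 1) + ?s (k - int m - 2)"
      using s_rec[of k m] False by (simp del: sseq.simps)
    have RHS: "(\<Sum>j<K. a m e j * (?s (k - 1 - int j))^2)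
        = a m e 0 * (?s (k - 1))^2 + (\<Sum>j<K'. a m e (Suc j) * (?s (k - 2 - int j))^2)"
      unfolding K sum.lessThan_Suc_shift by (simp del: sseq.simps add: algebra_simps)
    show ?thesis
    proof (cases "e = 0")
      case True
      have IH: "?s (k - 1) * ?s (k - 1 - int m - 1) = (\<Sum>j<K'. a m m j * (?s (k - 1 - 1 - int j))^2)"
        by (rule less.hyps) (use False kK in auto)
      have "?s k * ?s (k - int e - 1) = (?s (k - 1))^2 + ?s (k - 1) * ?s (k - int m - 2)"
        unfolding rec using True by (simp del: sseq.simps add: algebra_simps power2_eq_square)
      also have "\<dots> = (\<Sum>j<K. a m e j * (?s (k - 1 - int j))^2)"
        unfolding RHS using True IH by (simp del: sseq.simps add: a_0 a_zero_Suc algebra_simps)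
      finally show ?thesis .
    next
      case e: False
      have IH1: "?s (k - 1) * ?s (k - 1 - int (e - 1) - 1) = (\<Sum>j<K'. a m (e - 1) j * (?s (k - 1 - 1 - int j))^2)"
        by (rule less.hyps) (use False kK less.prems in auto)
      have kK2: "k - int e - 1 \<le> int (K' - e)" using kK by auto
      have IH2: "?s (k - int e - 1) * ?s (k - int e - 1 - int (m - e) - 1)
          = (\<Sum>j<K' - e. a m (m - e) j * (?s (k - int e - 1 - 1 - int j))^2)"
        by (rule less.hyps) (use False kK2 less.prems e in auto)
      have "?s k * ?s (k - int e - 1) = ?s (k - 1) * ?s (k - 1 - int (e - 1) - 1)
           + ?s (k - int e - 1) * ?s (k - int e - 1 - int (m - e) - 1)"
        unfolding rec using e less.prems by (simp del: sseq.simps add: algebra_simps of_nat_diff)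
      also have "\<dots> = (\<Sum>j<K'. a m (e - 1) j * (?s (k - 2 - int j))^2)
           + (\<Sum>j<K'. if e \<le> j then a m (m - e) (j - e) * (?s (k - 2 - int j))^2 else 0)"
        unfolding IH1 IH2 sum_reindex_ge by (simp del: sseq.simps add: algebra_simps)
      also have "\<dots> = (\<Sum>j<K'. a m e (Suc j) * (?s (k - 2 - int j))^2)"
        unfolding sum.distrib[symmetric]
        by (rule sum.cong) (use e less.prems in \<open>simp_all del: sseq.simps add: a_Suc algebra_simps\<close>)
      also have "\<dots> = (\<Sum>j<K. a m e j * (?s (k - 1 - int j))^2)"
        unfolding RHS using e by (simp del: sseq.simps add: a_0)
      finally show ?thesis .
    qed
  qed
qed



declare sseq.simps[simp del]

lemma Pperm_a: "1 \<le> l \<Longrightarrow> Pperm {-2, -1, int m} (l - 1) = a m 0 (l - 1)"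
proof -
  have "{0..int (l - 1)} - {int 0} = {1..int (l - 1)}" by auto
  then show ?thesis by (simp add: Pperm_R a_def)
qed

theorem mainTheorem6:
  fixes m n :: nat
  shows "(sseq 1 (m + 2) (int n))^2 =
           (if n = 0 then 1 else 0)
           + (sseq 1 (m + 2) (int n - 1))^2
           + (sseq 1 (m + 2) (int n - int m - 2))^2
           + 2 * (\<Sum>l = m + 2..n. Pperm {-2, -1, int m} (l - 1) * (sseq 1 (m + 2) (int n - int l))^2)"
proof (cases "n = 0")
  case True
  have "sseq 1 (m + 2) 0 = 1"
    using s_rec[of 0 m] by (simp add: s_neg del: sseq.simps)
  moreover have "sseq 1 (m + 2) (- 1) = 0" "sseq 1 (m + 2) (- int m - 2) = 0"
    by (simp_all add: s_neg del: sseq.simps)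
  ultimately show ?thesis using True by (simp del: sseq.simps)
next
  case False
  let ?s = "sseq 1 (m + 2)"
  have rec: "?s (int n) = ?s (int n - 1) + ?s (int n - int m - 2)"
    using s_rec[of "int n" m] False by (simp del: sseq.simps)
  have k: "?s (int n - 1) * ?s (int n - 1 - int m - 1)
      = (\<Sum>j<n - 1. a m m j * (?s (int n - 1 - 1 - int j))^2)"
    by (rule key) (use False in auto)
  have "(\<Sum>j<n - 1. a m m j * (?s (int n - 1 - 1 - int j))^2)
      = (\<Sum>j\<in>{m..<n - 1}. a m m j * (?s (int n - 1 - 1 - int j))^2)"
    by (rule sum.mono_neutral_right) (auto simp: a_small)
  also have "\<dots> = (\<Sum>l = m + 2..n. a m m (l - 2) * (?s (int n - int l))^2)"
    by (rule sum.reindex_bij_witness[where i = "\<lambda>l. l - 2" and j = "\<lambda>j. j + 2"])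
       (use False in \<open>auto simp: of_nat_diff algebra_simps\<close>)
  also have "\<dots> = (\<Sum>l = m + 2..n. Pperm {-2, -1, int m} (l - 1) * (?s (int n - int l))^2)"
  proof (rule sum.cong)
    fix l assume l: "l \<in> {m + 2..n}"
    then have "l - 1 = Suc (l - 2)" by auto
    then have "a m 0 (l - 1) = a m m (l - 2)" by (simp add: a_zero_Suc)
    then show "a m m (l - 2) * (?s (int n - int l))^2 = Pperm {-2, -1, int m} (l - 1) * (?s (int n - int l))^2"
      using Pperm_a[of l m] l by simp
  qed simp
  finally have cross: "?s (int n - 1) * ?s (int n - int m - 2)
      = (\<Sum>l = m + 2..n. Pperm {-2, -1, int m} (l - 1) * (?s (int n - int l))^2)"
    using k by (simp del: sseq.simps add: algebra_simps)
  show ?thesis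
    unfolding rec using False cross
    by (simp del: sseq.simps add: power2_sum algebra_simps)
qed

end
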